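(* Let $(A;R)\in\mathcal C$, let $t:R\to A$ be a transversal with image $A\setminus Y$, and let $F\subseteq A$ with $F\le A$. Then $$Z=\{f\in F\setminus Y: t^{-1}(f)\not\subseteq F\}\cup(F\cap Y)$$ is a basis for $F$ in the pregeometry $PG(A;R)$.
   Context: A set system is a pair $(A;R)$ where $A$ is a set and $R$ is a set of finite non-empty subsets of $A$. For finite $X\subseteq A$ write $R[X]=\{r\in R: r\subseteq X\}$ and define the predimension $\delta(X)=|X|-|R[X]|$. $\mathcal C$ is the class of finite set systems with $\delta(X)\ge 0$ for all $X\subseteq A$. For $X\subseteq A$, $X\le A$ means $\delta(X)\le\delta(X')$ for all $X'$ with $X\subseteq X'\subseteq A$. Define $d(X)=\min\{\delta(Y): X\subseteq Y\subseteq A\}$ and $\mathrm{cl}(X)=\{y\in A: d(X\cup\{y\})=d(X)\}$; $(A,\mathrm{cl})$ is a pregeometry with rank function $d$, denoted $PG(A;R)$. A transversal of $(A;R)$ is an injective function $t:R\to A$ with $t(r)\in r$ for all $r\in R$. *)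

theory Defs
  imports Main
begin

definition set_system :: "'a set \<Rightarrow> 'a set set \<Rightarrow> bool" where
  "set_system A R \<longleftrightarrow> finite A \<and> (\<forall>r\<in>R. r \<noteq> {} \<and> finite r \<and> r \<subseteq> A)"

definition Rof :: "'a set set \<Rightarrow> 'a set \<Rightarrow> 'a set set" where
  "Rof R X = {r \<in> R. r \<subseteq> X}"

definition delta :: "'a set set \<Rightarrow> 'a set \<Rightarrow> int" where
  "delta R X = int (card X) - int (card (Rof R X))"

definition in_C :: "'a set \<Rightarrow> 'a set set \<Rightarrow> bool" where
  "in_C A R \<longleftrightarrow> set_system A R \<and> (\<forall>X. X \<subseteq> A \<longrightarrow> delta R X \<ge> 0)"

text \<open>X \<le> A (self-sufficiency).\<close>
definition self_suff :: "'a set \<Rightarrow> 'a set set \<Rightarrow> 'a set \<Rightarrow> bool" where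
  "self_suff A R X \<longleftrightarrow> X \<subseteq> A \<and> (\<forall>X'. X \<subseteq> X' \<and> X' \<subseteq> A \<longrightarrow> delta R X \<le> delta R X')"

definition dim :: "'a set \<Rightarrow> 'a set set \<Rightarrow> 'a set \<Rightarrow> int" where
  "dim A R X = Min {delta R Y | Y. X \<subseteq> Y \<and> Y \<subseteq> A}"

definition cl :: "'a set \<Rightarrow> 'a set set \<Rightarrow> 'a set \<Rightarrow> 'a set" where
  "cl A R X = {y \<in> A. dim A R (X \<union> {y}) = dim A R X}"

definition pg_independent :: "'a set \<Rightarrow> 'a set set \<Rightarrow> 'a set \<Rightarrow> bool" where
  "pg_independent A R Z \<longleftrightarrow> Z \<subseteq> A \<and> (\<forall>z\<in>Z. z \<notin> cl A R (Z - {z}))"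

definition pg_basis :: "'a set \<Rightarrow> 'a set set \<Rightarrow> 'a set \<Rightarrow> 'a set \<Rightarrow> bool" where
  "pg_basis A R Z F \<longleftrightarrow> Z \<subseteq> F \<and> pg_independent A R Z \<and> F \<subseteq> cl A R Z"

definition transversal :: "'a set \<Rightarrow> 'a set set \<Rightarrow> ('a set \<Rightarrow> 'a) \<Rightarrow> bool" where
  "transversal A R t \<longleftrightarrow> inj_on t R \<and> (\<forall>r\<in>R. t r \<in> r)"

end

theory Submission
  imports Defs
begin

lemma finR: "set_system A R \<Longrightarrow> finite R"
  unfolding set_system_def by (meson Pow_iff finite_Pow_iff finite_subset subsetI)

lemma dim_le: "finite A \<Longrightarrow> X \<subseteq> Y \<Longrightarrow> Y \<subseteq> A \<Longrightarrow> dim A R X \<le> delta R Y"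
  unfolding dim_def
proof (rule Min_le)
  assume "finite A"
  have "{delta R Y |Y. X \<subseteq> Y \<and> Y \<subseteq> A} \<subseteq> delta R ` Pow A" by auto
  then show "finite {delta R Y |Y. X \<subseteq> Y \<and> Y \<subseteq> A}"
    using \<open>finite A\<close> finite_subset by blast
qed auto

lemma dim_ge: "finite A \<Longrightarrow> X \<subseteq> A \<Longrightarrow> (\<And>Y. X \<subseteq> Y \<Longrightarrow> Y \<subseteq> A \<Longrightarrow> c \<le> delta R Y) \<Longrightarrow> c \<le> dim A R X"
  unfolding dim_def
proof (rule Min.boundedI)
  assume "finite A"
  have "{delta R Y |Y. X \<subseteq> Y \<and> Y \<subseteq> A} \<subseteq> delta R ` Pow A" by auto
  then show "finite {delta R Y |Y. X \<subseteq> Y \<and> Y \<subseteq> A}"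
    using \<open>finite A\<close> finite_subset by blast
qed auto

lemma delta_le_card: "delta R X \<le> int (card X)"
  unfolding delta_def by simp

lemma submod:
  assumes fA: "finite A" and fR: "finite R" and "X \<subseteq> A" "F \<subseteq> A"
  shows "delta R (X \<union> F) + delta R (X \<inter> F) \<le> delta R X + delta R F"
proof -
  have fX: "finite X" "finite F" using assms finite_subset by auto
  have c1: "card (X \<union> F) + card (X \<inter> F) = card X + card F"
    using card_Un_Int[OF fX] by simp
  have fr: "finite (Rof R X)" "finite (Rof R F)" using fR unfolding Rof_def by auto
  have "card (Rof R X) + card (Rof R F) = card (Rof R X \<union> Rof R F) + card (Rof R X \<inter> Rof R F)"
    using card_Un_Int[OF fr] .
  moreover have "Rof R X \<inter> Rof R F = Rof R (X \<inter> F)" unfolding Rof_def by auto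
  moreover have "card (Rof R X \<union> Rof R F) \<le> card (Rof R (X \<union> F))"
    by (rule card_mono) (use fR in \<open>auto simp: Rof_def\<close>)
  ultimately have "card (Rof R X) + card (Rof R F) \<le> card (Rof R (X \<union> F)) + card (Rof R (X \<inter> F))" using add_le_mono1 by presburger
  then have "int (card (Rof R X)) + int (card (Rof R F)) \<le> int (card (Rof R (X \<union> F))) + int (card (Rof R (X \<inter> F)))" by linarith
  moreover have "int (card (X \<union> F)) + int (card (X \<inter> F)) = int (card X) + int (card F)" using c1 by linarith
  ultimately show ?thesis unfolding delta_def by linarith
qed

theorem corollary2p3:
  fixes A :: "'a set" and R :: "'a set set" and t :: "'a set \<Rightarrow> 'a" and Y F :: "'a set"
  assumes "in_C A R"
    and "transversal A R t"
    and "t ` R = A - Y"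
    and "self_suff A R F"
  shows "pg_basis A R
           ({f \<in> F - Y. \<exists>r\<in>R. t r = f \<and> \<not> r \<subseteq> F} \<union> (F \<inter> Y)) F"
proof -
  define Z where "Z = {f \<in> F - Y. \<exists>r\<in>R. t r = f \<and> \<not> r \<subseteq> F} \<union> (F \<inter> Y)"
  have ss: "set_system A R" using assms(1) unfolding in_C_def by auto
  have fA: "finite A" using ss unfolding set_system_def by auto
  have fR: "finite R" using finR[OF ss] .
  have FA: "F \<subseteq> A" and Fmin: "\<And>X'. F \<subseteq> X' \<Longrightarrow> X' \<subseteq> A \<Longrightarrow> delta R F \<le> delta R X'"
    using assms(4) unfolding self_suff_def by auto
  have inj: "inj_on t R" and tin: "\<And>r. r \<in> R \<Longrightarrow> t r \<in> r"
    using assms(2) unfolding transversal_def by auto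
  have fF: "finite F" using FA fA finite_subset by blast
  have ZF: "Z \<subseteq> F" unfolding Z_def by auto
  have fZ: "finite Z" using ZF fF finite_subset by blast
  have WF: "F - Z \<subseteq> t ` Rof R F"
  proof
    fix w assume w: "w \<in> F - Z"
    then have "w \<in> t ` R" using assms(3) FA unfolding Z_def by auto
    then obtain r where r: "r \<in> R" "t r = w" by auto
    then have "r \<subseteq> F" using w unfolding Z_def by auto
    then show "w \<in> t ` Rof R F" using r unfolding Rof_def by auto
  qed
  have "card (F - Z) \<le> card (t ` Rof R F)"
    by (rule card_mono[OF _ WF]) (use fR in \<open>auto simp: Rof_def\<close>)
  also have "\<dots> \<le> card (Rof R F)" by (rule card_image_le) (use fR in \<open>auto simp: Rof_def\<close>)
  finally have "card F - card Z \<le> card (Rof R F)" using card_Diff_subset[OF fZ ZF] by simp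
  then have deltaF: "delta R F \<le> int (card Z)"
    unfolding delta_def using card_mono[OF fF ZF] by linarith
  have lowF: "int (card Z) \<le> delta R X" if "Z \<subseteq> X" "X \<subseteq> F" for X
  proof -
    have fX: "finite X" using that fF finite_subset by blast
    have sub: "t ` Rof R X \<subseteq> X - Z"
    proof
      fix x assume "x \<in> t ` Rof R X"
      then obtain r where r: "r \<in> R" "r \<subseteq> X" "x = t r" unfolding Rof_def by auto
      have "x \<in> X" using tin r by auto
      moreover have "x \<notin> Y" using r assms(3) by auto
      moreover have "x \<notin> Z"
      proof
        assume "x \<in> Z"
        then obtain r' where "r' \<in> R" "t r' = x" "\<not> r' \<subseteq> F" unfolding Z_def using \<open>x \<notin> Y\<close> by auto
        then have "r' = r" using inj r inj_on_def by metis
        then show False using \<open>\<not> r' \<subseteq> F\<close> r that by auto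
      qed
      ultimately show "x \<in> X - Z" by auto
    qed
    have "card (Rof R X) = card (t ` Rof R X)"
      by (rule card_image[symmetric]) (rule inj_on_subset[OF inj], auto simp: Rof_def)
    also have "\<dots> \<le> card (X - Z)" by (rule card_mono) (use fX sub in auto)
    also have "\<dots> = card X - card Z" using card_Diff_subset[OF finite_subset[OF that(1) fX] that(1)] .
    finally show ?thesis unfolding delta_def using card_mono[OF fX that(1)] by linarith
  qed
  have low: "int (card Z) \<le> delta R X" if "Z \<subseteq> X" "X \<subseteq> A" for X
  proof -
    have "delta R (X \<union> F) + delta R (X \<inter> F) \<le> delta R X + delta R F"
      using submod[OF fA fR that(2) FA] .
    moreover have "delta R F \<le> delta R (X \<union> F)" using Fmin that FA by auto
    moreover have "int (card Z) \<le> delta R (X \<inter> F)" using lowF that ZF by auto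
    ultimately show ?thesis by linarith
  qed
  have ZA: "Z \<subseteq> A" using ZF FA by auto
  have dZ: "dim A R Z = int (card Z)"
  proof (rule antisym)
    show "dim A R Z \<le> int (card Z)" using dim_le[OF fA order.refl ZA, of R] delta_le_card[of R Z] by linarith
    show "int (card Z) \<le> dim A R Z" using dim_ge[OF fA ZA] low by blast
  qed
  have indep: "pg_independent A R Z"
    unfolding pg_independent_def cl_def
  proof (intro conjI ballI ZA)
    fix z assume z: "z \<in> Z"
    have "dim A R (Z - {z}) \<le> delta R (Z - {z})" by (rule dim_le[OF fA]) (use ZA in auto)
    also have "\<dots> \<le> int (card (Z - {z}))" by (rule delta_le_card)
    also have "\<dots> = int (card Z) - 1" proof -
      have "card Z > 0" using z fZ card_gt_0_iff by blast
      then show ?thesis using z fZ by simp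
    qed
    finally have "dim A R (Z - {z}) < dim A R Z" using dZ by linarith
    moreover have "Z - {z} \<union> {z} = Z" using z by blast
    ultimately have "dim A R (Z - {z}) < dim A R (Z - {z} \<union> {z})" by simp
    then show "z \<notin> {y \<in> A. dim A R (Z - {z} \<union> {y}) = dim A R (Z - {z})}" by auto
  qed
  have span: "F \<subseteq> cl A R Z"
    unfolding cl_def
  proof
    fix y assume y: "y \<in> F"
    have "dim A R (Z \<union> {y}) \<le> delta R F" by (rule dim_le[OF fA _ FA]) (use ZF y in auto)
    moreover have "int (card Z) \<le> dim A R (Z \<union> {y})"
      by (rule dim_ge[OF fA]) (use ZA y FA low in auto)
    ultimately show "y \<in> {y \<in> A. dim A R (Z \<union> {y}) = dim A R Z}" using deltaF dZ y FA by auto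
  qed
  show ?thesis using ZF indep span unfolding pg_basis_def Z_def by auto
qed

end
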